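(* Consider the exponential case $\ell(y)=y$, with $0<c<p$, horizon $T\ge1$, $b_1>0$, $a_1>1$, $W=(0,\infty)$ and $\tilde Q=[0,\infty)$. Then there exist a unique SMPS $(w^*_t(a),\tilde z^*_t(a,w))_{t\in\{1,\dots,T\}}$ and standardized value functions $f^R_t(a),\hat f^R_t(a,w),f^M_t(a)$ such that, for all $t\in\{1,\dots,T\}$ and $a\in A$, writing $\tilde z^*_t(a):=\tilde z^*_t(a,w^*_t(a))$: (i) $w^*_t(a)\in\big(0,\ p+f^R_{t+1}(a+1)-f^R_{t+1}(a)\big)$; (ii) $0<\tilde z^*_t(a)<\infty$; (iii) $p+f^R_t(a+1)-f^R_t(a)>0$; (iv) $p-c+f^R_t(a+1)+f^M_t(a+1)>f^R_t(a)+f^M_t(a)$.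
   Context: Let $A=\{a_1+n:n=0,1,2,\dots\}$. The predictive distribution function with hyperparameters $(a,b)$ is $G(y\mid a,b)=1-\big(b/(b+y)\big)^{a}$ for $y\ge0$, $\bar G=1-G$, and $E[\,\cdot\mid a,1]$ denotes expectation under $D\sim G(\cdot\mid a,1)$. Standardized per-period payoffs: retailer $\tilde\Pi^R(w,\tilde z\mid a)=(a-1)\big(p\,E[\min(D,\tilde z)\mid a,1]-w\tilde z\big)$, manufacturer $\tilde\Pi^M(w,\tilde z\mid a)=(a-1)(w-c)\tilde z$. For $f:A\to\mathbb R$ define $\mathcal E[f,\tilde z\mid a]=G(\tilde z\mid a-1,1)f(a+1)+\bar G(\tilde z\mid a-1,1)f(a)$. Standardized Markov strategies are maps $w_t:A\to W$ (manufacturer) and $\tilde z_t:A\times W\to\tilde Q$ (retailer), $t=1,\dots,T$. A pair $(w^*_t,\tilde z^*_t)_{t\le T}$ is a standardized Markov perfect solution (SMPS), with standardized value functions $f^R_t,f^M_t:A\to\mathbb R$ and $\hat f^R_t:A\times W\to\mathbb R$ ($t=1,\dots,T+1$), if for all $a\in A$, $w\in W$: (i) $f^R_{T+1}=\hat f^R_{T+1}=f^M_{T+1}=0$; (ii) for $t\le T$, $\hat f^R_t(a,w)=\max_{\tilde z\in\tilde Q}\{\tilde\Pi^R(w,\tilde z\mid a)+\mathcal E[f^R_{t+1},\tilde z\mid a]\}$ and $\tilde z^*_t(a,w)$ attains it; (iii) for $t\le T$, $f^M_t(a)=\max_{w\in W}\{\tilde\Pi^M(w,\tilde z^*_t(a,w)\mid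 a)+\mathcal E[f^M_{t+1},\tilde z^*_t(a,w)\mid a]\}$ and $w^*_t(a)$ attains it; (iv) $f^R_t(a)=\hat f^R_t(a,w^*_t(a))$. Conditions (iii)–(iv) of the claim for $t$ refer to the functions $f^R_t,f^M_t$ for $t\le T$ (and hold trivially-by-convention also at $t=T+1$ where they are $0$). *)

theory Defs
  imports "HOL-Analysis.Analysis"
begin

definition Aset :: "real \<Rightarrow> real set" where
  "Aset a1 = {a1 + real n | n. True}"

definition Wset :: "real set" where "Wset = {0<..}"
definition Qset :: "real set" where "Qset = {0..}"

definition Gdist :: "real \<Rightarrow> real \<Rightarrow> real \<Rightarrow> real" where
  "Gdist y a b = 1 - (b / (b + y)) powr a"

definition Gbar :: "real \<Rightarrow> real \<Rightarrow> real \<Rightarrow> real" where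
  "Gbar y a b = 1 - Gdist y a b"

definition Gdens :: "real \<Rightarrow> real \<Rightarrow> real" where
  "Gdens a y = (if 0 \<le> y then a * (1 + y) powr (-(a + 1)) else 0)"

definition expect_min :: "real \<Rightarrow> real \<Rightarrow> real" where
  "expect_min a z = (LINT y|lborel. Gdens a y * min y z)"

definition PiR :: "real \<Rightarrow> real \<Rightarrow> real \<Rightarrow> real \<Rightarrow> real" where
  "PiR p w z a = (a - 1) * (p * expect_min a z - w * z)"

definition PiM :: "real \<Rightarrow> real \<Rightarrow> real \<Rightarrow> real \<Rightarrow> real" where
  "PiM c w z a = (a - 1) * (w - c) * z"

definition condE :: "(real \<Rightarrow> real) \<Rightarrow> real \<Rightarrow> real \<Rightarrow> real" where
  "condE f z a = Gdist z (a - 1) 1 * f (a + 1) + Gbar z (a - 1) 1 * f a"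

text \<open>Standardized Markov perfect solution with value functions (periods 1..T, value
  functions indexed 1..T+1; functions are only constrained on their domains).\<close>
definition is_SMPS ::
  "real \<Rightarrow> real \<Rightarrow> real \<Rightarrow> nat \<Rightarrow> (nat \<Rightarrow> real \<Rightarrow> real) \<Rightarrow> (nat \<Rightarrow> real \<Rightarrow> real \<Rightarrow> real)
   \<Rightarrow> (nat \<Rightarrow> real \<Rightarrow> real) \<Rightarrow> (nat \<Rightarrow> real \<Rightarrow> real \<Rightarrow> real) \<Rightarrow> (nat \<Rightarrow> real \<Rightarrow> real) \<Rightarrow> bool" where
  "is_SMPS p c a1 T ws zs fR fhR fM \<longleftrightarrow>
     \<comment> \<open>strategies are standardized Markov strategies\<close>
     (\<forall>t\<in>{1..T}. \<forall>a\<in>Aset a1. ws t a \<in> Wset \<and> (\<forall>w\<in>Wset. zs t a w \<in> Qset)) \<and>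
     \<comment> \<open>(i) terminal conditions\<close>
     (\<forall>a\<in>Aset a1. fR (T + 1) a = 0 \<and> fM (T + 1) a = 0 \<and> (\<forall>w\<in>Wset. fhR (T + 1) a w = 0)) \<and>
     \<comment> \<open>(ii) retailer optimality\<close>
     (\<forall>t\<in>{1..T}. \<forall>a\<in>Aset a1. \<forall>w\<in>Wset.
        fhR t a w = PiR p w (zs t a w) a + condE (fR (t + 1)) (zs t a w) a \<and>
        (\<forall>z\<in>Qset. PiR p w z a + condE (fR (t + 1)) z a \<le> fhR t a w)) \<and>
     \<comment> \<open>(iii) manufacturer optimality\<close>
     (\<forall>t\<in>{1..T}. \<forall>a\<in>Aset a1.
        fM t a = PiM c (ws t a) (zs t a (ws t a)) a + condE (fM (t + 1)) (zs t a (ws t a)) a \<and>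
        (\<forall>w\<in>Wset. PiM c w (zs t a w) a + condE (fM (t + 1)) (zs t a w) a \<le> fM t a)) \<and>
     \<comment> \<open>(iv) retailer value along the equilibrium wholesale price\<close>
     (\<forall>t\<in>{1..T}. \<forall>a\<in>Aset a1. fR t a = fhR t a (ws t a))"

end

theory Submission
  imports Defs
begin


lemma d_powr1:
  fixes y r :: real assumes "-1 < y"
  shows "((\<lambda>y. (1+y) powr r) has_real_derivative r*(1+y) powr (r-1)) (at y)"
proof -
  have "((\<lambda>y. 1+y) has_real_derivative 1) (at y)" by (auto intro!: derivative_eq_intros)
  from DERIV_fun_powr[OF this, of r] assms show ?thesis by simp
qed

lemma F1_deriv:
  fixes a y :: real assumes "1 < a" "-1 < y"
  shows "((\<lambda>y. - (y * (1+y) powr (-a)) - (1+y) powr (1-a) / (a-1)) has_real_derivative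
          a * (1+y) powr (-(a+1)) * y) (at y)"
proof -
  have p: "0 < 1 + y" using assms by simp
  have A: "((\<lambda>y. y * (1+y) powr (-a)) has_real_derivative
      (1 * (1+y) powr (-a) + ((-a)*(1+y) powr (-a-1)) * y)) (at y)"
    by (intro DERIV_mult DERIV_ident d_powr1 assms)
  have B: "((\<lambda>y. (1+y) powr (1-a) / (a-1)) has_real_derivative ((1-a)*(1+y) powr (1-a-1))/(a-1)) (at y)"
    by (intro DERIV_cdivide d_powr1 assms)
  have D: "((\<lambda>y. - (y * (1+y) powr (-a)) - (1+y) powr (1-a) / (a-1)) has_real_derivative
     (-(1 * (1+y) powr (-a) + ((-a)*(1+y) powr (-a-1)) * y) - ((1-a)*(1+y) powr (1-a-1))/(a-1))) (at y)"
    by (intro DERIV_diff DERIV_minus A B)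
  have e: "(1+y) powr (-a-1) = (1+y) powr (-(a+1))" by (rule arg_cong[where f="\<lambda>t. (1+y) powr t"]) simp
  have eq: "(-(1 * (1+y) powr (-a) + ((-a)*(1+y) powr (-a-1)) * y) - ((1-a)*(1+y) powr (1-a-1))/(a-1))
     = a * (1+y) powr (-(a+1)) * y"
    unfolding e using assms by (simp add: field_simps)
  show ?thesis by (rule DERIV_cong[OF D eq])
qed


lemma F2_deriv:
  fixes a y z C :: real assumes "1 < a" "-1 < y"
  shows "((\<lambda>y. C + z * ((1+z) powr (-a) - (1+y) powr (-a))) has_real_derivative
          a * (1+y) powr (-(a+1)) * z) (at y)"
proof -
  have "((\<lambda>y. C + z * ((1+z) powr (-a) - (1+y) powr (-a))) has_real_derivative
          0 + z * (0 - (-a) * (1+y) powr (-a-1))) (at y)"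
    by (intro DERIV_add DERIV_const DERIV_cmult DERIV_diff d_powr1 assms)
  moreover have "(1+y) powr (-a-1) = (1+y) powr (-(a+1))" by (rule arg_cong[where f="\<lambda>t. (1+y) powr t"]) simp
  ultimately show ?thesis by (simp add: algebra_simps)
qed

lemma expect_min_formula:
  fixes a z :: real assumes a: "1 < a" and z: "0 \<le> z"
  shows "expect_min a z = (1 - (1+z) powr (1-a)) / (a-1)"
proof (cases "z = 0")
  case True
  have "(\<lambda>y. Gdens a y * min y z) = (\<lambda>y. 0)"
    using True by (auto simp: Gdens_def min_def)
  then show ?thesis using True by (simp add: expect_min_def)
next
  case False
  then have zp: "0 < z" using z by simp
  define F1 where "F1 = (\<lambda>y::real. - (y * (1+y) powr (-a)) - (1+y) powr (1-a) / (a-1))"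
  define F2 where "F2 = (\<lambda>y::real. F1 z + z * ((1+z) powr (-a) - (1+y) powr (-a)))"
  define g1 where "g1 = (\<lambda>y::real. a * (1+y) powr (-(a+1)) * y)"
  define g2 where "g2 = (\<lambda>y::real. a * (1+y) powr (-(a+1)) * z)"
  define H where "H = (\<lambda>y. if y \<in> {..z} then F1 y else F2 y)"
  define f where "f = (\<lambda>y. Gdens a y * min y z)"
  have dF1: "(F1 has_real_derivative g1 y) (at y)" if "-1 < y" for y
    unfolding F1_def g1_def using F1_deriv[OF a that] .
  have dF2: "(F2 has_real_derivative g2 y) (at y)" if "-1 < y" for y
    unfolding F2_def g2_def using F2_deriv[OF a that] .
  have dH: "(H has_real_derivative (if y \<in> {..z} then g1 y else g2 y)) (at y)" if y: "-1 < y" for y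
  proof -
    have "(H has_derivative (if y \<in> {..z} then (*) (g1 y) else (*) (g2 y))) (at y within {..z} \<union> {z<..})"
      unfolding H_def
    proof (rule has_derivative_If_within_closures)
      show "(F1 has_derivative (*) (g1 y)) (at y within {..z} \<union> (closure {..z} \<inter> closure {z<..}))"
        using dF1[OF y] unfolding has_field_derivative_def by (rule has_derivative_at_withinI)
      show "(F2 has_derivative (*) (g2 y)) (at y within {z<..} \<union> (closure {..z} \<inter> closure {z<..}))"
        using dF2[OF y] unfolding has_field_derivative_def by (rule has_derivative_at_withinI)
      show "y \<in> closure {..z} \<Longrightarrow> y \<in> closure {z<..} \<Longrightarrow> F1 y = F2 y"
        by (simp add: F2_def)
      show "y \<in> closure {..z} \<Longrightarrow> y \<in> closure {z<..} \<Longrightarrow> (*) (g1 y) = (*) (g2 y)"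
        by (simp add: g1_def g2_def)
      show "y \<in> {..z} \<union> {z<..}" by auto
    qed
    moreover have "{..z} \<union> {z<..} = (UNIV::real set)" by auto
    ultimately show ?thesis unfolding has_field_derivative_def
      by (simp add: if_distrib[of "\<lambda>x. (*) x"])
  qed
  have fpos: "f y = (if y \<in> {..z} then g1 y else g2 y)" if "0 < y" for y
    using that by (auto simp: f_def Gdens_def g1_def g2_def min_def)
  have I: "(LBINT y=ereal 0..\<infinity>. f y) = (F1 z + z * (1+z) powr (-a)) - F1 0"
  proof (rule interval_integral_FTC_nonneg(2))
    show "ereal 0 < \<infinity>" by simp
    show "DERIV H y :> f y" if "ereal 0 < ereal y" "ereal y < \<infinity>" for y
      using dH[of y] fpos[of y] that by simp
    show "isCont f y" if "ereal 0 < ereal y" "ereal y < \<infinity>" for y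
    proof -
      have y0: "0 < y" using that by simp
      have ev: "eventually (\<lambda>x. f x = a * (1+x) powr (-(a+1)) * min x z) (nhds y)"
        using eventually_nhds_in_open[of "{0<..}" y] y0
        by (auto elim!: eventually_mono simp: f_def Gdens_def)
      have "isCont (\<lambda>x. a * (1+x) powr (-(a+1)) * min x z) y"
        using y0 by (intro continuous_intros) auto
      then show ?thesis using isCont_cong[OF ev] by simp
    qed
    show "AE x in lborel. ereal 0 < ereal x \<longrightarrow> ereal x < \<infinity> \<longrightarrow> 0 \<le> f x"
      using a z by (auto simp: f_def Gdens_def)
    show "((H \<circ> real_of_ereal) \<longlongrightarrow> F1 0) (at_right (ereal 0))"
    proof -
      have "isCont H 0" using dH[of 0] by (intro DERIV_isCont) auto
      moreover have "H 0 = F1 0" using zp by (simp add: H_def)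
      ultimately have "(H \<longlongrightarrow> F1 0) (at 0)" by (simp add: isCont_def)
      then have "(H \<longlongrightarrow> F1 0) (at_right 0)" by (rule filterlim_mono) (auto simp: at_le)
      then show ?thesis by (simp add: ereal_tendsto_simps)
    qed
    show "((H \<circ> real_of_ereal) \<longlongrightarrow> F1 z + z * (1+z) powr (-a)) (at_left \<infinity>)"
    proof -
      have lim0: "((\<lambda>y::real. (1+y) powr (-a)) \<longlongrightarrow> 0) at_top"
        using a by (intro tendsto_neg_powr) (auto intro!: filterlim_tendsto_add_at_top filterlim_ident)
      have "(F2 \<longlongrightarrow> F1 z + z * ((1+z) powr (-a) - 0)) at_top"
        unfolding F2_def by (intro tendsto_intros lim0)
      then have l2: "(F2 \<longlongrightarrow> F1 z + z * (1+z) powr (-a)) at_top" by simp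
      have ev: "eventually (\<lambda>y. F2 y = H y) at_top"
        using eventually_gt_at_top[of z] by eventually_elim (simp add: H_def)
      have "(H \<longlongrightarrow> F1 z + z * (1+z) powr (-a)) at_top"
        using l2 tendsto_cong[OF ev] by simp
      then show ?thesis by (simp add: ereal_tendsto_simps)
    qed
  qed
  have E: "expect_min a z = (LBINT y=ereal 0..\<infinity>. f y)"
  proof -
    have "(LBINT y=ereal 0..\<infinity>. f y) = (LINT y:{0<..}|lborel. f y)"
      by (rule interval_integral_to_infinity_eq)
    also have "\<dots> = (LINT y|lborel. f y)"
      unfolding set_lebesgue_integral_def
      using zp by (intro Bochner_Integration.integral_cong) (auto simp: indicator_def f_def Gdens_def)
    finally show ?thesis by (simp add: expect_min_def f_def)
  qed
  have "(1+z) powr (1-a) = (1+z) powr (-a + 1)" by (simp add: algebra_simps)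
  also have "\<dots> = (1+z) powr (-a) * (1+z) powr 1" by (rule powr_add)
  also have "\<dots> = (1+z) powr (-a) * (1+z)" using zp by simp
  finally have "(1+z) powr (1-a) = (1+z) powr (-a) * (1+z)" .
  then show ?thesis unfolding E I using a by (simp add: F1_def field_simps)
qed


lemma bern_le:
  fixes x r :: real assumes "0 < x" "r \<le> 0"
  shows "1 + r * (x - 1) \<le> x powr r"
proof -
  have "1 + r * ln x \<le> exp (r * ln x)" by simp
  moreover have "r * (x - 1) \<le> r * ln x"
    using ln_le_minus_one[OF assms(1)] assms(2) by (simp add: mult_left_mono_neg)
  moreover have "x powr r = exp (r * ln x)" using assms(1) by (simp add: powr_def)
  ultimately show ?thesis by linarith
qed

lemma bern_less:
  fixes x r :: real assumes "0 < x" "r < 0" "x \<noteq> 1"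
  shows "1 + r * (x - 1) < x powr r"
proof -
  have "1 + r * ln x \<le> exp (r * ln x)" by simp
  moreover have "ln x < x - 1"
    using ln_le_minus_one[OF assms(1)] ln_eq_minus_one[OF assms(1)] assms(3) by fastforce
  then have "r * (x - 1) < r * ln x"
    using assms(2) by (simp add: mult_less_cancel_left_neg)
  moreover have "x powr r = exp (r * ln x)" using assms(1) by (simp add: powr_def)
  ultimately show ?thesis by linarith
qed

lemma condE_eq:
  fixes a z :: real assumes "0 \<le> z"
  shows "condE f z a = f a + (1 - (1+z) powr (1-a)) * (f (a+1) - f a)"
proof -
  have "(1 / (1 + z)) powr (a - 1) = (1+z) powr (1-a)"
    using assms by (simp add: powr_divide powr_diff)
  then show ?thesis unfolding condE_def Gbar_def Gdist_def by (simp add: algebra_simps)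
qed

lemma PiR_eq:
  fixes a z :: real assumes "1 < a" "0 \<le> z"
  shows "PiR p w z a = p * (1 - (1+z) powr (1-a)) - (a-1) * w * z"
  unfolding PiR_def expect_min_formula[OF assms] using assms(1) by (simp add: field_simps)

definition Kf :: "real \<Rightarrow> (real \<Rightarrow> real) \<Rightarrow> real \<Rightarrow> real" where
  "Kf p R a = p + R (a+1) - R a"

definition zopt :: "real \<Rightarrow> (real \<Rightarrow> real) \<Rightarrow> real \<Rightarrow> real \<Rightarrow> real" where
  "zopt p R a w = (if w < Kf p R a then (Kf p R a / w) powr (1/a) - 1 else 0)"

definition Robj :: "real \<Rightarrow> (real \<Rightarrow> real) \<Rightarrow> real \<Rightarrow> real \<Rightarrow> real \<Rightarrow> real" where
  "Robj p R a w z = PiR p w z a + condE R z a"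

lemma Robj_eq:
  fixes a z :: real assumes "1 < a" "0 \<le> z"
  shows "Robj p R a w z = R a + Kf p R a * (1 - (1+z) powr (1-a)) - (a-1) * w * z"
  unfolding Robj_def PiR_eq[OF assms] condE_eq[OF assms(2)] Kf_def by (simp add: algebra_simps)

lemma zopt_ge1:
  fixes a w :: real assumes "1 < a" "0 < w" "w < Kf p R a"
  shows "1 < (Kf p R a / w) powr (1/a)"
  using assms by (intro gr_one_powr) auto

lemma zopt_nonneg:
  fixes a w :: real assumes "1 < a" "0 < w"
  shows "0 \<le> zopt p R a w"
  unfolding zopt_def using zopt_ge1[OF assms, of p R] by auto

lemma core_R:
  fixes a w K z :: real assumes a: "1 < a" and w: "0 < w" and z: "0 \<le> z"
    and ne: "z \<noteq> (if w < K then (K / w) powr (1/a) - 1 else 0)"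
  shows "K * (1 - (1+z) powr (1-a)) - (a-1) * w * z <
    K * (1 - (1+(if w < K then (K / w) powr (1/a) - 1 else 0)) powr (1-a))
      - (a-1) * w * (if w < K then (K / w) powr (1/a) - 1 else 0)"
proof (cases "w < K")
  case True
  define t0 where "t0 = (K / w) powr (1/a)"
  have Kp: "0 < K" using True w by simp
  have t0p: "0 < t0" using Kp w by (simp add: t0_def)
  have t0a: "t0 powr a = K / w" unfolding t0_def using a Kp w by (simp add: powr_powr)
  define q where "q = t0 powr (1-a)"
  have q: "q = t0 * w / K" unfolding q_def powr_diff using t0a t0p by simp
  define t where "t = 1 + z"
  have tp: "0 < t" using z by (simp add: t_def)
  have tne: "t \<noteq> t0" using ne True by (auto simp: t_def t0_def)
  have "1 + (1-a) * (t/t0 - 1) < (t/t0) powr (1-a)"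
    using bern_less[of "t/t0" "1-a"] tp t0p tne a by auto
  also have "\<dots> = t powr (1-a) / q" by (simp add: powr_divide q_def)
  finally have lt: "1 + (1-a) * (t/t0 - 1) < t powr (1-a) / q" .
  have qp: "0 < q" using q t0p Kp w by simp
  have "q * (1 + (1-a) * (t/t0 - 1)) < t powr (1-a)"
    using lt qp by (metis pos_less_divide_eq mult.commute)
  then have "K * (q * (1 + (1-a) * (t/t0 - 1))) < K * t powr (1-a)"
    using Kp by simp
  moreover have "K * (q * (1 + (1-a) * (t/t0 - 1))) = t0 * w + (1-a) * w * (t - t0)"
  proof -
    have Kq: "K * q = t0 * w" using q Kp by simp
    have "K * (q * (1 + (1-a) * (t/t0 - 1))) = t0 * w * (1 + (1-a) * (t/t0 - 1))"
      by (metis Kq mult.assoc)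
    also have "\<dots> = t0 * w + (1-a) * w * (t - t0)" using t0p by (simp add: field_simps)
    finally show ?thesis .
  qed
  ultimately have ineq: "t0 * w + (1-a) * w * (t - t0) < K * t powr (1-a)" by simp
  have Kq: "K * q = t0 * w" using q Kp by simp
  have g: "K*(1 - t powr (1-a)) - (a-1)*w*(t-1) < K*(1-q) - (a-1)*w*(t0-1)"
    using ineq Kq by (simp add: algebra_simps)
  show ?thesis using g True by (simp add: t_def t0_def q_def)
next
  case False
  then have zp: "0 < z" using ne z by simp
  have s1: "1 - (1+z) powr (1-a) < (a-1) * z"
    using bern_less[of "1+z" "1-a"] zp a by (simp add: algebra_simps)
  have s2: "0 \<le> 1 - (1+z) powr (1-a)"
    using powr_mono[of "1-a" 0 "1+z"] a z by simp
  have s3: "0 < (a-1) * w * z" using a w zp by simp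
  have "K * (1 - (1+z) powr (1-a)) < (a-1) * w * z"
  proof (cases "K \<le> 0")
    case True
    have "K * (1 - (1+z) powr (1-a)) \<le> 0" using True s2 by (rule mult_nonpos_nonneg)
    then show ?thesis using s3 by linarith
  next
    case Kp: False
    have "K * (1 - (1+z) powr (1-a)) < K * ((a-1) * z)"
      using s1 Kp by (intro mult_strict_left_mono) auto
    also have "\<dots> \<le> w * ((a-1) * z)" using False a zp by (intro mult_right_mono) auto
    also have "\<dots> = (a-1) * w * z" by simp
    finally show ?thesis .
  qed
  then show ?thesis using False by simp
qed



definition hM :: "real \<Rightarrow> real \<Rightarrow> real \<Rightarrow> real \<Rightarrow> real \<Rightarrow> real" where
  "hM K c a DM s = (a-1)*(K * s powr a - c)*(1/s - 1) + (1 - s powr (a-1)) * DM"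

definition rhoM :: "real \<Rightarrow> real \<Rightarrow> real \<Rightarrow> real \<Rightarrow> real \<Rightarrow> real" where
  "rhoM K c a DM s = c * s powr (-a) + ((a-1)*K - DM) - a*K* s"

lemma hM_deriv:
  fixes s :: real assumes "0 < s"
  shows "DERIV (hM K c a DM) s :> (a-1) * s powr (a-2) * rhoM K c a DM s"
proof -
  have d1: "DERIV (\<lambda>s. s powr r) s :> r * s powr (r-1)" for r
    using has_real_derivative_powr[OF assms] .
  have d2: "DERIV (\<lambda>s. 1/s - 1) s :> -(1/s^2)"
    using assms by (auto intro!: derivative_eq_intros simp: power2_eq_square field_simps)
  have "DERIV (hM K c a DM) s :>
     (0 * (K * s powr a - c) + (K * (a * s powr (a-1)) - 0) * (a-1)) * (1/s - 1) + (-(1/s^2)) * ((a-1)*(K * s powr a - c))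
     + ((0 - (a-1) * s powr (a-1-1)) * DM + 0 * (1 - s powr (a-1)))"
    unfolding hM_def
    by (intro DERIV_add DERIV_mult DERIV_cmult DERIV_diff DERIV_const d1 d2)
  moreover have "(0 * (K * s powr a - c) + (K * (a * s powr (a-1)) - 0) * (a-1)) * (1/s - 1) + (-(1/s^2)) * ((a-1)*(K * s powr a - c))
     + ((0 - (a-1) * s powr (a-1-1)) * DM + 0 * (1 - s powr (a-1)))
     = (a-1) * s powr (a-2) * rhoM K c a DM s"
  proof -
    define P where "P = s powr (a-2)"
    have P: "0 < P" using assms by (simp add: P_def)
    have sh: "s powr (b + 1) = s powr b * s" for b using powr_add[of s b 1] assms by simp
    have e1: "s powr (a-1) = P * s"
    proof -
      have "s powr (a-1) = s powr ((a-2)+1)" by (rule arg_cong[where f="\<lambda>t. s powr t"]) simp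
      then show ?thesis using sh[of "a-2"] by (simp add: P_def)
    qed
    have e2: "s powr a = P * s^2"
    proof -
      have "s powr a = s powr ((a-1)+1)" by (rule arg_cong[where f="\<lambda>t. s powr t"]) simp
      then show ?thesis using sh[of "a-1"] e1 by (simp add: power2_eq_square)
    qed
    have e3: "s powr (-a) = 1 / (P * s^2)" using e2 by (simp add: powr_minus_divide)
    have e4: "s powr (a-1-1) = P" unfolding P_def by (rule arg_cong[where f="\<lambda>t. s powr t"]) simp
    show ?thesis unfolding rhoM_def e1 e2 e3 e4 P_def[symmetric] using assms P
      by (simp add: field_simps power2_eq_square)
  qed
  ultimately show ?thesis by (rule DERIV_cong)
qed



lemma rho_decr:
  assumes "1 < a" "0 < K" "0 < c" "0 < s" "s < s'"
  shows "rhoM K c a DM s' < rhoM K c a DM s"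
proof -
  have "s' powr (-a) < s powr (-a)" using assms by (intro powr_less_mono2_neg) auto
  then have "c * s' powr (-a) < c * s powr (-a)" using assms by simp
  moreover have "a*K* s < a*K* s'" using assms by simp
  ultimately show ?thesis unfolding rhoM_def by linarith
qed

lemma hM_cont: "0 < x \<Longrightarrow> continuous_on {x..y} (hM K c a DM)"
  by (intro continuous_at_imp_continuous_on ballI DERIV_isCont[OF hM_deriv]) auto

lemma hM_max:
  fixes a K c DM :: real
  assumes a: "1 < a" and K: "0 < K" and c: "0 < c" and L: "0 < K - c + DM"
  shows "\<exists>s0. 0 < s0 \<and> s0 < 1 \<and> 0 < hM K c a DM s0 \<and>
     (\<forall>s. 0 < s \<and> s < 1 \<and> s \<noteq> s0 \<longrightarrow> hM K c a DM s < hM K c a DM s0)"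
proof -
  let ?r = "rhoM K c a DM"
  let ?h = "hM K c a DM"
  define B where "B = (a-1)*K - DM"
  define e where "e = min (1/2) (c / (\<bar>B\<bar> + a*K + 1))"
  have "0 \<le> a*K" using a K by simp
  then have dpos: "0 < \<bar>B\<bar> + a*K + 1" by (smt (verit) abs_ge_zero)
  have ep: "0 < e" using c dpos by (simp add: e_def)
  have e1: "e \<le> 1/2" unfolding e_def by (rule min.cobounded1)
  have ec: "e \<le> c / (\<bar>B\<bar> + a*K + 1)" unfolding e_def by (rule min.cobounded2)
  have "e * (\<bar>B\<bar> + a*K + 1) \<le> c" using ec dpos by (simp add: pos_le_divide_eq)
  then have "\<bar>B\<bar> + a*K + 1 \<le> c / e" using ep by (simp add: field_simps)
  moreover have "e powr (-1) \<le> e powr (-a)" using a ep e1 by (intro powr_mono') auto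
  then have "1 / e \<le> e powr (-a)" using ep by (simp add: powr_minus_divide)
  then have "c / e \<le> c * e powr (-a)" using c by (metis mult_left_mono less_imp_le times_divide_eq_right mult.right_neutral)
  moreover have "a*K*e \<le> a*K" using a K e1 by simp
  ultimately have re: "0 < ?r e" unfolding rhoM_def B_def by linarith
  have r1: "?r 1 < 0" using L unfolding rhoM_def by (simp add: algebra_simps)
  have cont: "continuous_on {e..1} ?r" unfolding rhoM_def using ep
    by (intro continuous_at_imp_continuous_on ballI continuous_intros) auto
  obtain s0 where s0: "e \<le> s0" "s0 \<le> 1" "?r s0 = 0"
    using IVT2'[of ?r 1 0 e, OF less_imp_le[OF r1] less_imp_le[OF re] _ cont] e1 by auto
  have s0p: "0 < s0" using s0 ep by simp
  have s01: "s0 < 1" using s0 r1 by (cases "s0 = 1") auto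
  have pos: "?r x > 0" if "0 < x" "x < s0" for x
    using rho_decr[where DM=DM, OF a K c that] s0 by simp
  have neg: "?r x < 0" if "s0 < x" for x
    using rho_decr[where DM=DM, OF a K c s0p that] s0 by simp
  have dpos: "\<exists>y. DERIV ?h x :> y \<and> 0 < y" if "0 < x" "x < s0" for x
    using hM_deriv[of x] pos[OF that] that a by (intro exI[of _ "(a-1) * x powr (a-2) * ?r x"]) auto
  have dneg: "\<exists>y. DERIV ?h x :> y \<and> y < 0" if "s0 < x" for x
  proof -
    have "0 < x" using that s0p by simp
    then have "0 < (a-1) * x powr (a-2)" using a by simp
    then have "(a-1) * x powr (a-2) * ?r x < 0" using neg[OF that] by (simp add: mult_pos_neg)
    then show ?thesis using hM_deriv[of x] \<open>0 < x\<close> by blast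
  qed
  have left: "?h s < ?h s0" if "0 < s" "s < s0" for s
    by (rule DERIV_pos_imp_increasing_open[OF that(2)]) (use dpos that in auto, rule hM_cont[OF that(1)])
  have right: "?h s < ?h s0" if "s0 < s" for s
    by (rule DERIV_neg_imp_decreasing_open[OF that]) (use dneg in auto, rule hM_cont[OF s0p])
  have h1: "?h 1 = 0" by (simp add: hM_def)
  have "0 < ?h s0" using right[OF s01] h1 by simp
  moreover have "\<forall>s. 0 < s \<and> s < 1 \<and> s \<noteq> s0 \<longrightarrow> ?h s < ?h s0"
    using left right by (metis linorder_neqE_linordered_idom)
  ultimately show ?thesis using s0p s01 by blast
qed



definition Mobj :: "real \<Rightarrow> real \<Rightarrow> (real \<Rightarrow> real) \<Rightarrow> (real \<Rightarrow> real) \<Rightarrow> real \<Rightarrow> real \<Rightarrow> real" where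
  "Mobj p c R M a w = PiM c w (zopt p R a w) a + condE M (zopt p R a w) a"

lemma Mobj_eq:
  assumes "1 < a" "0 < w"
  shows "Mobj p c R M a w = (a-1)*(w-c)*zopt p R a w + M a
     + (1 - (1 + zopt p R a w) powr (1-a)) * (M (a+1) - M a)"
  unfolding Mobj_def PiM_def condE_eq[OF zopt_nonneg[OF assms]] by simp

lemma Mobj_high:
  assumes "1 < a" "0 < w" "Kf p R a \<le> w"
  shows "Mobj p c R M a w = M a"
  using assms unfolding Mobj_eq[OF assms(1,2)] by (simp add: zopt_def)

lemma Mobj_low:
  assumes a: "1 < a" and w: "0 < w" "w < Kf p R a"
  defines "s \<equiv> (w / Kf p R a) powr (1/a)"
  shows "Mobj p c R M a w = M a + hM (Kf p R a) c a (M (a+1) - M a) s"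
    and "0 < s" "s < 1" "Kf p R a * s powr a = w"
proof -
  let ?K = "Kf p R a"
  have K: "0 < ?K" using w by simp
  show sp: "0 < s" using K w by (simp add: s_def)
  have "s < 1 powr (1/a)" unfolding s_def using a w K by (intro powr_less_mono2) auto
  then show "s < 1" by simp
  have sa: "s powr a = w / ?K" unfolding s_def using a w K by (simp add: powr_powr)
  then show "?K * s powr a = w" using K by simp
  have z: "zopt p R a w = 1/s - 1"
    unfolding zopt_def s_def using w K by (simp add: powr_divide)
  have u: "(1 + zopt p R a w) powr (1-a) = s powr (a-1)"
    unfolding z using sp by (simp add: powr_divide powr_diff)
  show "Mobj p c R M a w = M a + hM ?K c a (M (a+1) - M a) s"
    unfolding Mobj_eq[OF a w(1)] u hM_def using \<open>?K * s powr a = w\<close> z by simp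
qed

lemma mfr_max:
  assumes a: "1 < a" and K: "0 < Kf p R a" and c: "0 < c"
    and L: "0 < Kf p R a - c + (M (a+1) - M a)"
  shows "\<exists>w0. 0 < w0 \<and> w0 < Kf p R a \<and> M a < Mobj p c R M a w0 \<and>
     (\<forall>w. 0 < w \<and> w \<noteq> w0 \<longrightarrow> Mobj p c R M a w < Mobj p c R M a w0)"
proof -
  let ?K = "Kf p R a" and ?D = "M (a+1) - M a"
  obtain s0 where s0: "0 < s0" "s0 < 1" "0 < hM ?K c a ?D s0"
    "\<forall>s. 0 < s \<and> s < 1 \<and> s \<noteq> s0 \<longrightarrow> hM ?K c a ?D s < hM ?K c a ?D s0"
    using hM_max[OF a K c L] by blast
  define w0 where "w0 = ?K * s0 powr a"
  have sa1: "s0 powr a < 1 powr a" using s0 a by (intro powr_less_mono2) auto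
  have w0p: "0 < w0" "w0 < ?K" using K s0 sa1 by (auto simp: w0_def)
  have ss0: "(w0 / ?K) powr (1/a) = s0" using K a s0 by (simp add: w0_def powr_powr)
  have Mw0: "Mobj p c R M a w0 = M a + hM ?K c a ?D s0"
    using Mobj_low(1)[OF a w0p] ss0 by simp
  have "Mobj p c R M a w < Mobj p c R M a w0" if "0 < w" "w \<noteq> w0" for w
  proof (cases "w < ?K")
    case True
    define s where "s = (w / ?K) powr (1/a)"
    have sprops: "0 < s" "s < 1" "?K * s powr a = w"
      using Mobj_low(2-4)[OF a that(1) True] by (simp_all add: s_def)
    have "s \<noteq> s0" using sprops(3) that(2) w0_def by auto
    then show ?thesis using Mobj_low(1)[OF a that(1) True] s0(4) sprops Mw0 by (simp add: s_def)
  next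
    case False
    then show ?thesis using Mobj_high[OF a that(1)] Mw0 s0(3) by simp
  qed
  then show ?thesis using w0p Mw0 s0(3) by (intro exI[of _ w0]) auto
qed

definition wopt :: "real \<Rightarrow> real \<Rightarrow> (real \<Rightarrow> real) \<Rightarrow> (real \<Rightarrow> real) \<Rightarrow> real \<Rightarrow> real" where
  "wopt p c R M a = (SOME w. w \<in> Wset \<and> (\<forall>w'\<in>Wset. Mobj p c R M a w' \<le> Mobj p c R M a w))"

lemma wopt_props:
  assumes a: "1 < a" and K: "0 < Kf p R a" and c: "0 < c"
    and L: "0 < Kf p R a - c + (M (a+1) - M a)"
  shows "0 < wopt p c R M a" "wopt p c R M a < Kf p R a" "M a < Mobj p c R M a (wopt p c R M a)"
    "\<And>w. 0 < w \<Longrightarrow> w \<noteq> wopt p c R M a \<Longrightarrow> Mobj p c R M a w < Mobj p c R M a (wopt p c R M a)"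
    "\<And>w. w \<in> Wset \<Longrightarrow> (\<forall>w'\<in>Wset. Mobj p c R M a w' \<le> Mobj p c R M a w) \<Longrightarrow> w = wopt p c R M a"
proof -
  obtain w0 where w0: "0 < w0" "w0 < Kf p R a" "M a < Mobj p c R M a w0"
     "\<And>w. 0 < w \<Longrightarrow> w \<noteq> w0 \<Longrightarrow> Mobj p c R M a w < Mobj p c R M a w0"
    using mfr_max[OF assms] by blast
  have uniq: "w = w0" if "w \<in> Wset" "\<forall>w'\<in>Wset. Mobj p c R M a w' \<le> Mobj p c R M a w" for w
  proof (rule ccontr)
    assume "w \<noteq> w0"
    then have "Mobj p c R M a w < Mobj p c R M a w0" using w0(4) that(1) by (simp add: Wset_def)
    moreover have "Mobj p c R M a w0 \<le> Mobj p c R M a w" using that(2) w0(1) by (simp add: Wset_def)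
    ultimately show False by simp
  qed
  have le: "Mobj p c R M a w' \<le> Mobj p c R M a w0" if "w' \<in> Wset" for w'
    using w0(4)[of w'] that by (cases "w' = w0") (auto simp: Wset_def)
  have ex: "w0 \<in> Wset \<and> (\<forall>w'\<in>Wset. Mobj p c R M a w' \<le> Mobj p c R M a w0)"
    using w0(1) le by (auto simp: Wset_def)
  have "wopt p c R M a \<in> Wset \<and> (\<forall>w'\<in>Wset. Mobj p c R M a w' \<le> Mobj p c R M a (wopt p c R M a))"
    unfolding wopt_def by (rule someI[of _ w0]) (rule ex)
  then have eq: "wopt p c R M a = w0" using uniq by blast
  show "0 < wopt p c R M a" "wopt p c R M a < Kf p R a" "M a < Mobj p c R M a (wopt p c R M a)"
    using w0 eq by auto
  show "\<And>w. 0 < w \<Longrightarrow> w \<noteq> wopt p c R M a \<Longrightarrow> Mobj p c R M a w < Mobj p c R M a (wopt p c R M a)"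
    using w0 eq by auto
  show "\<And>w. w \<in> Wset \<Longrightarrow> (\<forall>w'\<in>Wset. Mobj p c R M a w' \<le> Mobj p c R M a w) \<Longrightarrow> w = wopt p c R M a"
    using uniq eq by auto
qed



lemma Robj_max:
  assumes a: "1 < a" and w: "0 < w" and z: "0 \<le> z"
  shows "Robj p R a w z \<le> Robj p R a w (zopt p R a w)"
    and "z \<noteq> zopt p R a w \<Longrightarrow> Robj p R a w z < Robj p R a w (zopt p R a w)"
proof -
  have zo: "0 \<le> zopt p R a w" using zopt_nonneg[OF a w] .
  have strict: "Robj p R a w z < Robj p R a w (zopt p R a w)" if ne: "z \<noteq> zopt p R a w"
  proof -
    have ne': "z \<noteq> (if w < Kf p R a then (Kf p R a / w) powr (1/a) - 1 else 0)"
      using ne by (simp add: zopt_def)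
    show ?thesis unfolding Robj_eq[OF a z] Robj_eq[OF a zo]
      using core_R[OF a w z ne'] by (simp add: zopt_def)
  qed
  then show "z \<noteq> zopt p R a w \<Longrightarrow> Robj p R a w z < Robj p R a w (zopt p R a w)" .
  show "Robj p R a w z \<le> Robj p R a w (zopt p R a w)"
    using strict by (cases "z = zopt p R a w") (auto simp: less_imp_le)
qed

lemma condE_cong: "f a = g a \<Longrightarrow> f (a+1) = g (a+1) \<Longrightarrow> condE f z a = condE g z a"
  by (simp add: condE_def)

definition stepR :: "real \<Rightarrow> real \<Rightarrow> (real \<Rightarrow> real) \<Rightarrow> (real \<Rightarrow> real) \<Rightarrow> real \<Rightarrow> real" where
  "stepR p c R M = (\<lambda>a. Robj p R a (wopt p c R M a) (zopt p R a (wopt p c R M a)))"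

definition stepM :: "real \<Rightarrow> real \<Rightarrow> (real \<Rightarrow> real) \<Rightarrow> (real \<Rightarrow> real) \<Rightarrow> real \<Rightarrow> real" where
  "stepM p c R M = (\<lambda>a. Mobj p c R M a (wopt p c R M a))"

definition invR :: "real \<Rightarrow> real \<Rightarrow> (real \<Rightarrow> real) \<Rightarrow> (real \<Rightarrow> real) \<Rightarrow> bool" where
  "invR p c R M \<longleftrightarrow> (\<forall>a>1. 0 < Kf p R a \<and> 0 < Kf p R a - c + (M (a+1) - M a))"

lemma step_local:
  assumes a: "1 < a" and K: "0 < Kf p R a" and c: "0 < c"
    and L: "0 < Kf p R a - c + (M (a+1) - M a)"
  shows "0 \<le> stepR p c R M a - R a" "stepR p c R M a - R a < Kf p R a"
    "0 \<le> stepM p c R M a - M a"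
    "(stepR p c R M a - R a) + (stepM p c R M a - M a) < Kf p R a - c + (M (a+1) - M a)"
proof -
  let ?w = "wopt p c R M a"
  let ?K = "Kf p R a"
  let ?D = "M (a+1) - M a"
  let ?L = "Kf p R a - c + (M (a+1) - M a)"
  define z where "z = zopt p R a ?w"
  define u where "u = (1+z) powr (1-a)"
  have w: "0 < ?w" "?w < ?K" "M a < Mobj p c R M a ?w" using wopt_props(1-3)[OF a K c L] by auto
  have zpos: "0 < z" unfolding z_def zopt_def using zopt_ge1[OF a w(1) w(2)] w(2) by simp
  have up: "0 < u" using zpos by (simp add: u_def)
  have R: "stepR p c R M a = R a + ?K * (1 - u) - (a-1) * ?w * z"
    unfolding stepR_def z_def[symmetric] u_def using Robj_eq[OF a less_imp_le[OF zpos]] by simp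
  have M: "stepM p c R M a = (a-1)*(?w-c)*z + M a + (1 - u) * ?D"
    unfolding stepM_def u_def z_def using Mobj_eq[OF a w(1)] by simp
  have "Robj p R a ?w 0 < Robj p R a ?w z"
    using Robj_max(2)[OF a w(1), of 0] zpos by (simp add: z_def)
  moreover have "Robj p R a ?w 0 = R a" using Robj_eq[OF a, of 0] by simp
  ultimately show "0 \<le> stepR p c R M a - R a" unfolding stepR_def z_def by simp
  have "0 \<le> (a-1) * ?w * z" using a w zpos by simp
  moreover have "0 < ?K * u" using K up by simp
  ultimately show "stepR p c R M a - R a < ?K" unfolding R by (simp add: algebra_simps)
  show "0 \<le> stepM p c R M a - M a" using w(3) by (simp add: stepM_def)
  have b: "1 - u \<le> (a-1) * z" using bern_le[of "1+z" "1-a"] zpos a by (simp add: u_def algebra_simps)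
  have b2: "(1 - u) * c \<le> (a-1) * z * c" using b c by (simp add: mult_right_mono)
  have "0 < u * ?L" using up L by simp
  moreover have "(1 - u) * ?L = ?L - u * ?L" by (simp add: algebra_simps)
  ultimately have b3: "(1 - u) * ?L < ?L" by linarith
  have "(stepR p c R M a - R a) + (stepM p c R M a - M a) = (1-u) * ?L + (1 - u) * c - (a-1) * z * c"
    unfolding R M by (simp add: algebra_simps)
  then show "(stepR p c R M a - R a) + (stepM p c R M a - M a) < ?L" using b2 b3 by linarith
qed

lemma step_inv:
  assumes "invR p c R M" "0 < c"
  shows "invR p c (stepR p c R M) (stepM p c R M)"
  unfolding invR_def
proof (intro allI impI conjI)
  fix a :: real assume a: "1 < a"
  have a1: "1 < a + 1" using a by simp
  have h0: "0 < Kf p R a" "0 < Kf p R a - c + (M (a+1) - M a)" using assms(1)[unfolded invR_def, rule_format, OF a] by blast+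
  have h1: "0 < Kf p R (a+1)" "0 < Kf p R (a+1) - c + (M (a+1+1) - M (a+1))"
    using assms(1)[unfolded invR_def, rule_format, OF a1] by blast+
  note A = step_local[OF a h0(1) assms(2) h0(2)]
  note B = step_local[OF a1 h1(1) assms(2) h1(2)]
  show "0 < Kf p (stepR p c R M) a"
    using A(2) B(1) by (simp add: Kf_def)
  show "0 < Kf p (stepR p c R M) a - c + (stepM p c R M (a+1) - stepM p c R M a)"
    using A(4) B(1) B(3) by (simp add: Kf_def)
qed

fun vals :: "real \<Rightarrow> real \<Rightarrow> nat \<Rightarrow> (real \<Rightarrow> real) \<times> (real \<Rightarrow> real)" where
  "vals p c 0 = (\<lambda>a. 0, \<lambda>a. 0)"
| "vals p c (Suc n) = (stepR p c (fst (vals p c n)) (snd (vals p c n)),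
                       stepM p c (fst (vals p c n)) (snd (vals p c n)))"

lemma vals_inv:
  assumes "0 < c" "c < p"
  shows "invR p c (fst (vals p c n)) (snd (vals p c n))"
proof (induction n)
  case 0
  then show ?case using assms by (simp add: invR_def Kf_def)
next
  case (Suc n)
  then show ?case using step_inv[OF Suc assms(1)] by simp
qed



lemma Aset_gt1: "1 < a1 \<Longrightarrow> a \<in> Aset a1 \<Longrightarrow> 1 < a"
  by (auto simp: Aset_def)

lemma Aset_suc: "a \<in> Aset a1 \<Longrightarrow> a + 1 \<in> Aset a1"
proof -
  assume "a \<in> Aset a1"
  then obtain n where "a = a1 + real n" by (auto simp: Aset_def)
  then have "a + 1 = a1 + real (Suc n)" by simp
  then show ?thesis unfolding Aset_def by blast
qed

theorem proposition2:
  fixes p c b1 a1 :: real and T :: nat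
  assumes "0 < c" and "c < p" and "1 \<le> T" and "0 < b1" and "1 < a1"
  shows "\<exists>ws zs fR fhR fM.
     is_SMPS p c a1 T ws zs fR fhR fM \<and>
     (\<forall>ws' zs' fR' fhR' fM'. is_SMPS p c a1 T ws' zs' fR' fhR' fM' \<longrightarrow>
        (\<forall>t\<in>{1..T}. \<forall>a\<in>Aset a1. ws' t a = ws t a \<and> (\<forall>w\<in>Wset. zs' t a w = zs t a w)) \<and>
        (\<forall>t\<in>{1..T+1}. \<forall>a\<in>Aset a1. fR' t a = fR t a \<and> fM' t a = fM t a \<and>
            (\<forall>w\<in>Wset. fhR' t a w = fhR t a w))) \<and>
     (\<forall>t\<in>{1..T}. \<forall>a\<in>Aset a1.
        0 < ws t a \<and> ws t a < p + fR (t + 1) (a + 1) - fR (t + 1) a \<and>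
        0 < zs t a (ws t a) \<and>
        p + fR t (a + 1) - fR t a > 0 \<and>
        p - c + fR t (a + 1) + fM t (a + 1) > fR t a + fM t a)"
proof -
  note c = assms(1) and cp = assms(2) and a1 = assms(5)
  define fR where "fR = (\<lambda>t. fst (vals p c (T + 1 - t)))"
  define fM where "fM = (\<lambda>t. snd (vals p c (T + 1 - t)))"
  define ws where "ws = (\<lambda>t a. wopt p c (fR (t+1)) (fM (t+1)) a)"
  define zs where "zs = (\<lambda>t a w. zopt p (fR (t+1)) a w)"
  define fhR where "fhR = (\<lambda>t a w. if t \<le> T then Robj p (fR (t+1)) a w (zopt p (fR (t+1)) a w) else 0)"
  have inv: "invR p c (fR t) (fM t)" for t
    unfolding fR_def fM_def by (rule vals_inv[OF c cp])
  have K: "0 < Kf p (fR t) a" and L: "0 < Kf p (fR t) a - c + (fM t (a+1) - fM t a)" if "1 < a" for t a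
    using inv[of t, unfolded invR_def, rule_format, OF that] by blast+
  have fR_step: "fR t = stepR p c (fR (t+1)) (fM (t+1))" and fM_step: "fM t = snd (vals p c (T + 1 - t))"
    and fM_step': "fM t = stepM p c (fR (t+1)) (fM (t+1))" if "t \<le> T" for t
  proof -
    have e: "T + 1 - t = Suc (T + 1 - (t+1))" using that by simp
    show "fR t = stepR p c (fR (t+1)) (fM (t+1))" unfolding fR_def fM_def e by simp
    show "fM t = snd (vals p c (T + 1 - t))" by (simp add: fM_def)
    show "fM t = stepM p c (fR (t+1)) (fM (t+1))" unfolding fR_def fM_def e by simp
  qed
  have WP: "0 < ws t a" "ws t a < Kf p (fR (t+1)) a"
    "\<And>w. w \<in> Wset \<Longrightarrow> (\<forall>w'\<in>Wset. Mobj p c (fR (t+1)) (fM (t+1)) a w' \<le> Mobj p c (fR (t+1)) (fM (t+1)) a w)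
        \<Longrightarrow> w = ws t a"
    "\<And>w. 0 < w \<Longrightarrow> Mobj p c (fR (t+1)) (fM (t+1)) a w \<le> Mobj p c (fR (t+1)) (fM (t+1)) a (ws t a)"
    if "1 < a" for t a
  proof -
    note W = wopt_props[OF that K[where t="t+1" and a=a, OF that] c L[where t="t+1" and a=a, OF that]]
    show "0 < ws t a" "ws t a < Kf p (fR (t+1)) a" using W(1,2) by (simp_all add: ws_def)
    show "\<And>w. w \<in> Wset \<Longrightarrow> (\<forall>w'\<in>Wset. Mobj p c (fR (t+1)) (fM (t+1)) a w' \<le> Mobj p c (fR (t+1)) (fM (t+1)) a w)
        \<Longrightarrow> w = ws t a" using W(5) by (simp add: ws_def)
    show "Mobj p c (fR (t+1)) (fM (t+1)) a w \<le> Mobj p c (fR (t+1)) (fM (t+1)) a (ws t a)" if "0 < w" for w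
      using W(4)[OF that] by (cases "w = ws t a") (auto simp: ws_def less_imp_le)
  qed
  have Aa: "1 < a" if "a \<in> Aset a1" for a using Aset_gt1[OF a1 that] .
  have SMPS: "is_SMPS p c a1 T ws zs fR fhR fM"
    unfolding is_SMPS_def
  proof (intro conjI ballI)
    fix t a assume t: "t \<in> {1..T}" and a: "a \<in> Aset a1"
    show "ws t a \<in> Wset" using WP(1)[OF Aa[OF a]] by (simp add: Wset_def)
    show "zs t a w \<in> Qset" if "w \<in> Wset" for w
      using zopt_nonneg[OF Aa[OF a], of w] that by (simp add: zs_def Qset_def Wset_def)
  next
    fix a assume a: "a \<in> Aset a1"
    show "fR (T + 1) a = 0" "fM (T + 1) a = 0" by (simp_all add: fR_def fM_def)
    show "fhR (T + 1) a w = 0" for w by (simp add: fhR_def)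
  next
    fix t a w assume t: "t \<in> {1..T}" and a: "a \<in> Aset a1" and w: "w \<in> Wset"
    show "fhR t a w = PiR p w (zs t a w) a + condE (fR (t + 1)) (zs t a w) a"
      using t by (simp add: fhR_def zs_def Robj_def)
    show "PiR p w z a + condE (fR (t + 1)) z a \<le> fhR t a w" if "z \<in> Qset" for z
      using t Robj_max(1)[OF Aa[OF a], of w z] w that by (auto simp: fhR_def Robj_def Qset_def Wset_def)
  next
    fix t a assume t: "t \<in> {1..T}" and a: "a \<in> Aset a1"
    show "fM t a = PiM c (ws t a) (zs t a (ws t a)) a + condE (fM (t + 1)) (zs t a (ws t a)) a"
      using fM_step'[of t] t by (simp add: stepM_def Mobj_def ws_def zs_def)
    show "PiM c w (zs t a w) a + condE (fM (t + 1)) (zs t a w) a \<le> fM t a" if "w \<in> Wset" for w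
      using fM_step'[of t] t WP(4)[OF Aa[OF a], of w t] that
      by (auto simp: stepM_def Mobj_def ws_def zs_def Wset_def)
  next
    fix t a assume t: "t \<in> {1..T}" and a: "a \<in> Aset a1"
    show "fR t a = fhR t a (ws t a)"
      using fR_step[of t] t by (simp add: stepR_def fhR_def ws_def)
  qed
  have UNIQ: "(\<forall>t\<in>{1..T}. \<forall>a\<in>Aset a1. ws' t a = ws t a \<and> (\<forall>w\<in>Wset. zs' t a w = zs t a w)) \<and>
        (\<forall>t\<in>{1..T+1}. \<forall>a\<in>Aset a1. fR' t a = fR t a \<and> fM' t a = fM t a \<and>
            (\<forall>w\<in>Wset. fhR' t a w = fhR t a w))"
    if S': "is_SMPS p c a1 T ws' zs' fR' fhR' fM'" for ws' zs' fR' fhR' fM'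
  proof -
    note S1 = S'[unfolded is_SMPS_def, THEN conjunct1]
    note S2 = S'[unfolded is_SMPS_def, THEN conjunct2, THEN conjunct1]
    note S3 = S'[unfolded is_SMPS_def, THEN conjunct2, THEN conjunct2, THEN conjunct1]
    note S4 = S'[unfolded is_SMPS_def, THEN conjunct2, THEN conjunct2, THEN conjunct2, THEN conjunct1]
    note S5 = S'[unfolded is_SMPS_def, THEN conjunct2, THEN conjunct2, THEN conjunct2, THEN conjunct2]
    define P where "P = (\<lambda>t. \<forall>a\<in>Aset a1. fR' t a = fR t a \<and> fM' t a = fM t a \<and>
       (\<forall>w\<in>Wset. fhR' t a w = fhR t a w) \<and>
       (t \<le> T \<longrightarrow> ws' t a = ws t a \<and> (\<forall>w\<in>Wset. zs' t a w = zs t a w)))"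
    have PP: "P t" if t1: "1 \<le> t" and tT: "t \<le> T + 1" for t
      using tT
    proof (induction t rule: inc_induct)
      case base
      show ?case unfolding P_def using S2 by (simp add: fR_def fM_def fhR_def)
    next
      case (step n)
      have n: "n \<in> {1..T}" using step.hyps t1 by simp
      show ?case unfolding P_def
      proof (intro ballI)
        fix a assume a: "a \<in> Aset a1"
        have a': "a + 1 \<in> Aset a1" using Aset_suc[OF a] .
        have ag: "1 < a" using Aa[OF a] .
        have IH: "fR' (n+1) a = fR (n+1) a" "fR' (n+1) (a+1) = fR (n+1) (a+1)"
           "fM' (n+1) a = fM (n+1) a" "fM' (n+1) (a+1) = fM (n+1) (a+1)"
          using step.IH a a' unfolding P_def by auto
        have ceR: "condE (fR' (n+1)) z a = condE (fR (n+1)) z a" for z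
          using IH by (intro condE_cong) auto
        have ceM: "condE (fM' (n+1)) z a = condE (fM (n+1)) z a" for z
          using IH by (intro condE_cong) auto
        have zeq: "zs' n a w = zs n a w" and heq: "fhR' n a w = fhR n a w" if w: "w \<in> Wset" for w
        proof -
          have wp: "0 < w" using w by (simp add: Wset_def)
          have z'q: "0 \<le> zs' n a w" using S1 n a w by (auto simp: Qset_def)
          have S3n: "fhR' n a w = PiR p w (zs' n a w) a + condE (fR' (n + 1)) (zs' n a w) a \<and>
            (\<forall>z\<in>Qset. PiR p w z a + condE (fR' (n + 1)) z a \<le> fhR' n a w)"
            using S3 n a w by blast
          have eq': "fhR' n a w = Robj p (fR (n+1)) a w (zs' n a w)"
            using S3n ceR by (simp add: Robj_def)
          have le': "Robj p (fR (n+1)) a w z \<le> fhR' n a w" if "0 \<le> z" for z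
          proof -
            have "PiR p w z a + condE (fR' (n+1)) z a \<le> fhR' n a w"
              using S3n that unfolding Qset_def by blast
            then show ?thesis by (simp only: Robj_def ceR)
          qed
          have "Robj p (fR (n+1)) a w (zopt p (fR (n+1)) a w) \<le> Robj p (fR (n+1)) a w (zs' n a w)"
            using le'[OF zopt_nonneg[OF ag wp]] eq' by simp
          then have "zs' n a w = zopt p (fR (n+1)) a w"
            using Robj_max(2)[OF ag wp z'q, of p "fR (n+1)"] by fastforce
          then show "zs' n a w = zs n a w" by (simp add: zs_def)
          then show "fhR' n a w = fhR n a w" using eq' n by (simp add: fhR_def zs_def)
        qed
        have Meq: "PiM c w (zs' n a w) a + condE (fM' (n+1)) (zs' n a w) a
             = Mobj p c (fR (n+1)) (fM (n+1)) a w" if w: "w \<in> Wset" for w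
          using zeq[OF w] ceM by (simp add: Mobj_def zs_def)
        have ws'W: "ws' n a \<in> Wset" using S1 n a by auto
        have M4: "fM' n a = PiM c (ws' n a) (zs' n a (ws' n a)) a + condE (fM' (n+1)) (zs' n a (ws' n a)) a"
             "\<forall>w\<in>Wset. PiM c w (zs' n a w) a + condE (fM' (n+1)) (zs' n a w) a \<le> fM' n a"
        proof -
          have "fM' n a = PiM c (ws' n a) (zs' n a (ws' n a)) a + condE (fM' (n+1)) (zs' n a (ws' n a)) a \<and>
             (\<forall>w\<in>Wset. PiM c w (zs' n a w) a + condE (fM' (n+1)) (zs' n a w) a \<le> fM' n a)"
            using S4 n a by blast
          then show "fM' n a = PiM c (ws' n a) (zs' n a (ws' n a)) a + condE (fM' (n+1)) (zs' n a (ws' n a)) a"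
             "\<forall>w\<in>Wset. PiM c w (zs' n a w) a + condE (fM' (n+1)) (zs' n a w) a \<le> fM' n a"
            by blast+
        qed
        have fM'v: "fM' n a = Mobj p c (fR (n+1)) (fM (n+1)) a (ws' n a)"
          using M4(1) Meq[OF ws'W] by simp
        have "\<forall>w'\<in>Wset. Mobj p c (fR (n+1)) (fM (n+1)) a w' \<le> Mobj p c (fR (n+1)) (fM (n+1)) a (ws' n a)"
          using M4(2) Meq fM'v by auto
        then have wseq: "ws' n a = ws n a" using WP(3)[OF ag ws'W] by blast
        have nT: "n \<le> T" using n by simp
        have fMeq: "fM' n a = fM n a"
          using fM'v wseq fM_step'[OF nT] by (simp add: stepM_def ws_def)
        have wsW: "ws n a \<in> Wset" using wseq ws'W by simp
        have fReq: "fR' n a = fR n a"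
        proof -
          have "fR' n a = fhR' n a (ws' n a)" using S5 n a by auto
          also have "\<dots> = fhR n a (ws n a)" using heq[OF ws'W] wseq by simp
          also have "\<dots> = fR n a" using fR_step[OF nT] nT by (simp add: fhR_def stepR_def ws_def)
          finally show ?thesis .
        qed
        show "fR' n a = fR n a \<and> fM' n a = fM n a \<and> (\<forall>w\<in>Wset. fhR' n a w = fhR n a w) \<and>
          (n \<le> T \<longrightarrow> ws' n a = ws n a \<and> (\<forall>w\<in>Wset. zs' n a w = zs n a w))"
          using fReq fMeq heq wseq zeq by blast
      qed
    qed
    have A: "\<forall>t\<in>{1..T}. \<forall>a\<in>Aset a1. ws' t a = ws t a \<and> (\<forall>w\<in>Wset. zs' t a w = zs t a w)"
    proof (intro ballI)
      fix t a assume t: "t \<in> {1..T}" and a: "a \<in> Aset a1"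
      have "P t" using t by (intro PP) auto
      then show "ws' t a = ws t a \<and> (\<forall>w\<in>Wset. zs' t a w = zs t a w)" using t a unfolding P_def by auto
    qed
    have B: "\<forall>t\<in>{1..T+1}. \<forall>a\<in>Aset a1. fR' t a = fR t a \<and> fM' t a = fM t a \<and>
            (\<forall>w\<in>Wset. fhR' t a w = fhR t a w)"
    proof (intro ballI)
      fix t a assume t: "t \<in> {1..T+1}" and a: "a \<in> Aset a1"
      have "P t" using t by (intro PP) auto
      then show "fR' t a = fR t a \<and> fM' t a = fM t a \<and> (\<forall>w\<in>Wset. fhR' t a w = fhR t a w)"
        using a unfolding P_def by auto
    qed
    show ?thesis using A B by blast
  qed
  have PROPS: "0 < ws t a \<and> ws t a < p + fR (t + 1) (a + 1) - fR (t + 1) a \<and>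
        0 < zs t a (ws t a) \<and>
        p + fR t (a + 1) - fR t a > 0 \<and>
        p - c + fR t (a + 1) + fM t (a + 1) > fR t a + fM t a"
    if t: "t \<in> {1..T}" and a: "a \<in> Aset a1" for t a
  proof -
    have ag: "1 < a" using Aa[OF a] .
    have z: "0 < zs t a (ws t a)"
      using zopt_ge1[OF ag WP(1)[OF ag] WP(2)[OF ag]] WP(2)[OF ag] by (simp add: zs_def zopt_def)
    show ?thesis using WP(1,2)[OF ag, of t] z K[OF ag, of t] L[OF ag, of t]
      by (simp add: Kf_def algebra_simps)
  qed
  show ?thesis
    apply (rule exI[of _ ws], rule exI[of _ zs], rule exI[of _ fR], rule exI[of _ fhR], rule exI[of _ fM])
    using SMPS UNIQ PROPS by blast
qed


end
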